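(* Let $n,m,\ell$ be integers with $n-1\ge m\ge \ell\ge 0$. Then $$\sum_{j=0}^{n-m-2}\binom{n-m+\ell-3-2j}{\ell-1-j}\,\mathcal Y_n\big(2^{\{m-\ell+1+j\}},1^{\{n-m+\ell-3-2j\}}\big)=\frac{1}{n(m+1)}\binom{n-1}{m}\left(\binom{n}{\ell}-\binom{m+1}{\ell}\right).$$ In particular (case $\ell=1$), $\mathcal Y_n(2^{\{m\}},1^{\{n-m-2\}})=\frac{n-m-1}{n(m+1)}\binom{n-1}{m}$.
   Context: Let $\zeta_n=e^{2\pi\sqrt{-1}/n}$. For integers $s_1,\dots,s_m$, define $\mathfrak Z_n(s_1,\dots,s_m):=\sum_{1\le i_1<\cdots<i_m\le n-1}\prod_{k=1}^{m}(1-\zeta_n^{i_k})^{-s_k}$ (equal to $1$ if $m=0$ and to $0$ if $m>n-1$). Define $\mathcal Y_n(s_1,\dots,s_m):=\sum_{\sigma}\mathfrak Z_n(\sigma)$, where $\sigma$ runs over all distinct sequences obtained by rearranging $(s_1,\dots,s_m)$ (each distinct rearrangement counted once); $\mathcal Y_n$ of the empty sequence is $1$. Notation: $a^{\{k\}}$ denotes the block $a,a,\dots,a$ of length $k$; any term $\mathcal Y_n(\dots)$ in which some block has negative length is interpreted as $0$. Binomial coefficients $\binom{a}{b}$ are $0$ when $b<0$ or $b>a\ge0$. *)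

theory Defs
  imports "HOL-Analysis.Analysis" "HOL-Combinatorics.Multiset_Permutations"
begin

definition zeta :: "nat \<Rightarrow> complex" where
  "zeta n = exp (2 * pi * \<i> / of_nat n)"

definition ZZ :: "nat \<Rightarrow> int list \<Rightarrow> complex" where
  "ZZ n s = (\<Sum>is \<in> {is. sorted_wrt (<) is \<and> length is = length s \<and> set is \<subseteq> {1..n-1}}.
              \<Prod>k<length s. (1 - zeta n ^ (is ! k)) powi (- (s ! k)))"

definition YY :: "nat \<Rightarrow> int list \<Rightarrow> complex" where
  "YY n s = (\<Sum>\<sigma> \<in> permutations_of_multiset (mset s). ZZ n \<sigma>)"

text \<open>Binomial coefficient with integer arguments, for a >= 0: zero if b < 0 or b > a.
  (Only used where a >= 0 or where the accompanying Y-term vanishes.)\<close>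
definition binomZ :: "int \<Rightarrow> int \<Rightarrow> complex" where
  "binomZ a b = (if a < 0 \<or> b < 0 then 0 else of_nat (nat a choose nat b))"

definition Y21 :: "nat \<Rightarrow> int \<Rightarrow> int \<Rightarrow> complex" where
  "Y21 n p q = (if p < 0 \<or> q < 0 then 0 else YY n (replicate (nat p) 2 @ replicate (nat q) 1))"

end

theory Submission
  imports Defs
begin

definition xx :: "nat \<Rightarrow> nat \<Rightarrow> complex" where "xx n i = inverse (1 - zeta n ^ i)"

lemma zeta_pow: "zeta n ^ k = exp(2 * of_real pi * \<i> * of_nat k / of_nat n)"
  unfolding zeta_def by (simp add: exp_of_nat_mult[symmetric] algebra_simps)

lemma zeta_pow_n: "n \<ge> 1 \<Longrightarrow> zeta n ^ n = 1"
  unfolding zeta_pow by (simp add: complex_root_unity)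

lemma zeta_pow_eq1: "n \<ge> 1 \<Longrightarrow> zeta n ^ k = 1 \<longleftrightarrow> n dvd k"
  unfolding zeta_pow by (rule complex_root_unity_eq_1)

lemma zeta_inj: "n \<ge> 1 \<Longrightarrow> j < n \<Longrightarrow> k < n \<Longrightarrow> zeta n ^ j = zeta n ^ k \<longleftrightarrow> j = k"
  unfolding zeta_pow by (simp add: complex_root_unity_eq)

lemma prod_monom1: "finite X \<Longrightarrow> (\<Prod>i\<in>X. monom (f i) (Suc 0)) = monom (\<Prod>i\<in>X. f i) (card X)"
  by (induction X rule: finite_induct) (auto simp: mult_monom)

lemma coeff_prod_lin:
  fixes f :: "'a \<Rightarrow> 'b::comm_ring_1"
  assumes "finite S"
  shows "coeff (\<Prod>i\<in>S. [:1, f i:]) k = (\<Sum>P\<in>{P. P \<subseteq> S \<and> card P = k}. \<Prod>i\<in>P. f i)"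
proof -
  have "(\<Prod>i\<in>S. [:1, f i:]) = (\<Prod>i\<in>S. monom (f i) 1 + 1)"
    by (intro prod.cong refl) (simp add: monom_Suc one_pCons monom_0)
  also have "\<dots> = (\<Sum>X\<in>Pow S. (\<Prod>i\<in>X. monom (f i) 1) * (\<Prod>i\<in>S-X. 1))"
    by (rule prod_add[OF assms])
  also have "\<dots> = (\<Sum>X\<in>Pow S. monom (\<Prod>i\<in>X. f i) (card X))"
  proof (intro sum.cong refl)
    fix X assume "X \<in> Pow S"
    hence "finite X" using finite_subset assms by auto
    thus "(\<Prod>i\<in>X. monom (f i) 1) * (\<Prod>i\<in>S-X. 1) = monom (\<Prod>i\<in>X. f i) (card X)"
      by (simp add: prod_monom1)
  qed
  finally have "coeff (\<Prod>i\<in>S. [:1, f i:]) k = (\<Sum>X\<in>Pow S. if card X = k then (\<Prod>i\<in>X. f i) else 0)"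
    by (simp add: coeff_sum coeff_monom)
  also have "\<dots> = (\<Sum>X\<in>{X \<in> Pow S. card X = k}. \<Prod>i\<in>X. f i)"
    by (rule sum.inter_filter[symmetric]) (simp add: assms)
  also have "{X \<in> Pow S. card X = k} = {P. P \<subseteq> S \<and> card P = k}" by auto
  finally show ?thesis .
qed

lemma zeta_ne1: "1 \<le> i \<Longrightarrow> i < n \<Longrightarrow> zeta n ^ i \<noteq> 1"
  by (subst zeta_pow_eq1) (auto dest: dvd_imp_le)

lemma poly_id:
  assumes n: "n \<ge> 1"
  shows "(\<Prod>i\<in>{1..n-1}. [:1, xx n i:]) = smult (1/of_nat n) (\<Sum>j<n. [:1,1:]^j)"
proof (rule poly_eqI_degree)
  let ?A = "insert 0 ((\<lambda>i. zeta n ^ i - 1) ` {1..n-1})"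
  have inj: "inj_on (\<lambda>i. zeta n ^ i - 1) {1..n-1}"
    using n by (auto simp: inj_on_def zeta_inj)
  have "0 \<notin> (\<lambda>i. zeta n ^ i - 1) ` {1..n-1}" using zeta_ne1 n by force
  hence cA: "card ?A = n" using inj n by (simp add: card_image)
  have "degree (\<Prod>i\<in>{1..n-1}. [:1, xx n i:]) \<le> sum (degree \<circ> (\<lambda>i. [:1, xx n i:])) {1..n-1}"
    by (rule degree_prod_sum_le) simp
  also have "\<dots> \<le> sum (\<lambda>_. 1) {1..n-1}" by (intro sum_mono) auto
  also have "\<dots> = n - 1" by simp
  finally show "degree (\<Prod>i\<in>{1..n-1}. [:1, xx n i:]) < card ?A" using cA n by linarith
  have "degree (\<Sum>j<n. [:1,1:]^j :: complex poly) \<le> n - 1"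
  proof (rule degree_sum_le)
    fix j assume "j \<in> {..<n}"
    have "degree ([:1,1:]^j :: complex poly) \<le> degree [:1,1::complex:] * j" by (rule degree_power_le)
    also have "\<dots> \<le> n - 1" using \<open>j \<in> {..<n}\<close> by simp
    finally show "degree ([:1,1:]^j :: complex poly) \<le> n - 1" .
  qed simp
  then show "degree (smult (1/of_nat n) (\<Sum>j<n. [:1,1:]^j) :: complex poly) < card ?A"
    using cA n degree_smult_le[of "1/of_nat n" "(\<Sum>j<n. [:1,1:]^j) :: complex poly"] by linarith
  fix u assume "u \<in> ?A"
  then consider "u = 0" | k where "k \<in> {1..n-1}" "u = zeta n ^ k - 1" by auto
  then show "poly (\<Prod>i\<in>{1..n-1}. [:1, xx n i:]) u = poly (smult (1/of_nat n) (\<Sum>j<n. [:1,1:]^j)) u"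
  proof cases
    case 1 then show ?thesis using n by (simp add: poly_prod poly_sum)
  next
    case 2
    have ne: "zeta n ^ k \<noteq> 1" using 2 n zeta_ne1 by auto
    have "poly (\<Prod>i\<in>{1..n-1}. [:1, xx n i:]) u = (\<Prod>i\<in>{1..n-1}. 1 + u * xx n i)"
      by (simp add: poly_prod)
    also have "\<dots> = 0"
    proof (rule prod_zero)
      show "\<exists>i\<in>{1..n-1}. 1 + u * xx n i = 0"
        using 2 ne by (intro bexI[of _ k]) (auto simp: xx_def field_simps)
    qed simp
    finally have l: "poly (\<Prod>i\<in>{1..n-1}. [:1, xx n i:]) u = 0" .
    have "poly (\<Sum>j<n. [:1,1:]^j) u = (\<Sum>j<n. (zeta n ^ k) ^ j)"
      using 2 by (simp add: poly_sum)
    also have "\<dots> = 0"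
    proof -
      have "(zeta n ^ k) ^ n = 1" using zeta_pow_n[OF n]
        by (metis power_mult power_mult_distrib power_one mult.commute)
      then show ?thesis using ne by (simp add: geometric_sum)
    qed
    finally show ?thesis using l by simp
  qed
qed

lemma coeff_11_power: "coeff ([:1,1:]^j :: 'a::comm_semiring_1 poly) k = of_nat (j choose k)"
proof (cases "k \<le> j")
  case True then show ?thesis by (simp add: coeff_linear_poly_power)
next
  case False
  have "degree ([:1,1:]^j :: 'a poly) \<le> degree [:1,1::'a:] * j" by (rule degree_power_le)
  also have "\<dots> \<le> j" by simp
  finally show ?thesis using False by (simp add: coeff_eq_0 binomial_eq_0)
qed

definition EE :: "nat \<Rightarrow> nat \<Rightarrow> complex" where
  "EE n k = (\<Sum>P\<in>{P. P \<subseteq> {1..n-1} \<and> card P = k}. \<Prod>i\<in>P. xx n i)"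

lemma EE_formula:
  assumes n: "n \<ge> 1"
  shows "EE n k = of_nat (n choose (k+1)) / of_nat n"
proof -
  have h: "(\<Sum>j<n. j choose k) = n choose (k+1)"
  proof -
    have "(\<Sum>j<n. j choose k) = (\<Sum>j\<le>n-1. j choose k)"
      using n by (intro sum.cong) auto
    also have "\<dots> = Suc (n-1) choose Suc k" by (rule sum_choose_upper)
    finally show ?thesis using n by simp
  qed
  have "EE n k = coeff (\<Prod>i\<in>{1..n-1}. [:1, xx n i:]) k"
    unfolding EE_def by (simp add: coeff_prod_lin)
  also have "\<dots> = (1/of_nat n) * (\<Sum>j<n. of_nat (j choose k))"
    unfolding poly_id[OF n]
    by (simp add: coeff_sum coeff_11_power)
  also have "(\<Sum>j<n. of_nat (j choose k)) = (of_nat (n choose (k+1)) :: complex)"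
    using arg_cong[OF h, of "of_nat :: nat \<Rightarrow> complex"] by (simp add: of_nat_sum)
  finally show ?thesis by simp
qed

definition Eg :: "nat set \<Rightarrow> (nat \<Rightarrow> complex) \<Rightarrow> nat \<Rightarrow> complex" where
  "Eg I x k = (\<Sum>P\<in>{P. P \<subseteq> I \<and> card P = k}. \<Prod>i\<in>P. x i)"

definition Wg :: "nat set \<Rightarrow> (nat \<Rightarrow> complex) \<Rightarrow> nat \<Rightarrow> nat \<Rightarrow> complex" where
  "Wg I x a b = (\<Sum>S\<in>{S. S \<subseteq> I \<and> card S = a+b}. \<Sum>A\<in>{A. A \<subseteq> S \<and> card A = a}.
                   (\<Prod>i\<in>S. x i) * (\<Prod>i\<in>A. x i))"

lemma fibre_card:
  assumes I: "finite I" and S: "S \<subseteq> I" and A: "A \<subseteq> S" and cA: "card A = a"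
    and cS: "card S = p + q - a" and ap: "a \<le> p" and aq: "a \<le> q"
  shows "card {(P,Q). (P \<subseteq> I \<and> card P = p) \<and> (Q \<subseteq> I \<and> card Q = q) \<and> P \<union> Q = S \<and> P \<inter> Q = A}
         = (p + q - 2*a) choose (p - a)"
proof -
  have fS: "finite S" using S I finite_subset by auto
  have fA: "finite A" using A fS finite_subset by auto
  let ?D = "{C. C \<subseteq> S - A \<and> card C = p - a}"
  let ?f = "\<lambda>C. (A \<union> C, S - C)"
  have inj: "inj_on ?f ?D"
  proof (rule inj_onI)
    fix C1 C2 assume "C1 \<in> ?D" "C2 \<in> ?D" "?f C1 = ?f C2"
    then show "C1 = C2" by auto
  qed
  have img: "?f ` ?D = {(P,Q). (P \<subseteq> I \<and> card P = p) \<and> (Q \<subseteq> I \<and> card Q = q) \<and> P \<union> Q = S \<and> P \<inter> Q = A}"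
  proof (intro equalityI subsetI)
    fix y assume "y \<in> ?f ` ?D"
    then obtain C where C: "C \<subseteq> S - A" "card C = p - a" and y: "y = ?f C" by auto
    have fC: "finite C" using C fS finite_subset by blast
    have "card (A \<union> C) = a + (p - a)" using C cA fA fC by (subst card_Un_disjoint) auto
    hence c1: "card (A \<union> C) = p" using ap by simp
    have "card (S - C) = card S - card C" using C fS by (intro card_Diff_subset) (auto intro: finite_subset)
    hence c2: "card (S - C) = q" using C cS ap aq by simp
    show "y \<in> {(P,Q). (P \<subseteq> I \<and> card P = p) \<and> (Q \<subseteq> I \<and> card Q = q) \<and> P \<union> Q = S \<and> P \<inter> Q = A}"
      using y c1 c2 C A S by auto
  next
    fix y assume "y \<in> {(P,Q). (P \<subseteq> I \<and> card P = p) \<and> (Q \<subseteq> I \<and> card Q = q) \<and> P \<union> Q = S \<and> P \<inter> Q = A}"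
    then obtain P Q where y: "y = (P,Q)" and PQ: "P \<subseteq> I" "card P = p" "Q \<subseteq> I" "card Q = q" "P \<union> Q = S" "P \<inter> Q = A"
      by auto
    have fP: "finite P" using PQ I finite_subset by auto
    have "card (P - A) = card P - card A" using PQ fP by (intro card_Diff_subset) (auto intro: finite_subset)
    hence "card (P - A) = p - a" using PQ cA by simp
    moreover have "P - A \<subseteq> S - A" using PQ by auto
    moreover have "?f (P - A) = (P, Q)" using PQ by auto
    ultimately show "y \<in> ?f ` ?D" using y by (auto intro!: image_eqI[of _ _ "P - A"])
  qed
  have "card (S - A) = p + q - 2*a" using A fS cA cS by (simp add: card_Diff_subset fA)
  then have "card ?D = (p + q - 2*a) choose (p - a)"
    using fS n_subsets[of "S - A" "p - a"] by simp
  then show ?thesis using card_image[OF inj] img by simp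
qed

lemma Eg_mult:
  assumes I: "finite I"
  shows "Eg I x p * Eg I x q = (\<Sum>a\<le>min p q. of_nat ((p+q-2*a) choose (p-a)) * Wg I x a (p+q-2*a))"
proof -
  define Sp where "Sp = {P. P \<subseteq> I \<and> card P = p}"
  define Sq where "Sq = {Q. Q \<subseteq> I \<and> card Q = q}"
  define h where "h = (\<lambda>(S::nat set,A::nat set). (\<Prod>i\<in>S. x i) * (\<Prod>i\<in>A. x i))"
  define \<phi> where "\<phi> = (\<lambda>(P::nat set,Q::nat set). (P \<union> Q, P \<inter> Q))"
  define T where "T = (\<lambda>a. SIGMA S:{S. S \<subseteq> I \<and> card S = p+q-a}. {A. A \<subseteq> S \<and> card A = a})"
  have fPow: "finite {P. P \<subseteq> I \<and> P' P}" for P' by (rule finite_subset[of _ "Pow I"]) (auto simp: I)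
  have fSp: "finite Sp" and fSq: "finite Sq" unfolding Sp_def Sq_def using fPow by auto
  have fT: "finite (T a)" for a
    unfolding T_def by (intro finite_SigmaI fPow) (auto intro: finite_subset[of _ "Pow I"] I)
  have "Eg I x p * Eg I x q = (\<Sum>P\<in>Sp. \<Sum>Q\<in>Sq. (\<Prod>i\<in>P. x i) * (\<Prod>i\<in>Q. x i))"
    unfolding Eg_def Sp_def Sq_def by (rule sum_product)
  also have "\<dots> = (\<Sum>z\<in>Sp \<times> Sq. h (\<phi> z))"
    unfolding sum.cartesian_product
  proof (intro sum.cong refl)
    fix z assume "z \<in> Sp \<times> Sq"
    then obtain P Q where z: "z = (P,Q)" "P \<subseteq> I" "Q \<subseteq> I" unfolding Sp_def Sq_def by auto
    have "finite P" "finite Q" using z I finite_subset by auto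
    then show "(case z of (P, Q) \<Rightarrow> (\<Prod>i\<in>P. x i) * (\<Prod>i\<in>Q. x i)) = h (\<phi> z)"
      unfolding z h_def \<phi>_def by (simp add: prod.union_inter)
  qed
  also have "\<dots> = (\<Sum>y\<in>(\<Union>a\<in>{..min p q}. T a). \<Sum>z\<in>{z \<in> Sp \<times> Sq. \<phi> z = y}. h (\<phi> z))"
  proof (rule sum.group[symmetric])
    show "finite (Sp \<times> Sq)" using fSp fSq by simp
    show "finite (\<Union>a\<in>{..min p q}. T a)" using fT by simp
    show "\<phi> ` (Sp \<times> Sq) \<subseteq> (\<Union>a\<in>{..min p q}. T a)"
    proof
      fix y assume "y \<in> \<phi> ` (Sp \<times> Sq)"
      then obtain P Q where y: "y = (P \<union> Q, P \<inter> Q)" and PQ: "P \<subseteq> I" "card P = p" "Q \<subseteq> I" "card Q = q"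
        unfolding \<phi>_def Sp_def Sq_def by auto
      have fP: "finite P" "finite Q" using PQ I finite_subset by auto
      have c1: "card (P \<inter> Q) \<le> p" "card (P \<inter> Q) \<le> q" using PQ fP by (auto intro: card_mono)
      have "card (P \<union> Q) + card (P \<inter> Q) = p + q" using card_Un_Int[OF fP] PQ by simp
      then have "card (P \<union> Q) = p + q - card (P \<inter> Q)" by simp
      then show "y \<in> (\<Union>a\<in>{..min p q}. T a)" unfolding T_def y using PQ c1
        by (intro UN_I[of "card (P \<inter> Q)"]) auto
    qed
  qed
  also have "\<dots> = (\<Sum>a\<le>min p q. \<Sum>y\<in>T a. \<Sum>z\<in>{z \<in> Sp \<times> Sq. \<phi> z = y}. h (\<phi> z))"
    by (rule sum.UNION_disjoint) (simp, simp add: fT, auto simp: T_def)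
  also have "\<dots> = (\<Sum>a\<le>min p q. of_nat ((p+q-2*a) choose (p-a)) * Wg I x a (p+q-2*a))"
  proof (intro sum.cong refl)
    fix a assume a: "a \<in> {..min p q}"
    have "(\<Sum>y\<in>T a. \<Sum>z\<in>{z \<in> Sp \<times> Sq. \<phi> z = y}. h (\<phi> z))
        = (\<Sum>y\<in>T a. of_nat ((p+q-2*a) choose (p-a)) * h y)"
    proof (intro sum.cong refl)
      fix y assume y: "y \<in> T a"
      then obtain S A where yy: "y = (S,A)" "S \<subseteq> I" "card S = p+q-a" "A \<subseteq> S" "card A = a"
        unfolding T_def by auto
      have eq: "{z \<in> Sp \<times> Sq. \<phi> z = y} = {(P,Q). (P \<subseteq> I \<and> card P = p) \<and> (Q \<subseteq> I \<and> card Q = q) \<and> P \<union> Q = S \<and> P \<inter> Q = A}"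
        unfolding Sp_def Sq_def \<phi>_def yy by auto
      have "(\<Sum>z\<in>{z \<in> Sp \<times> Sq. \<phi> z = y}. h (\<phi> z)) = (\<Sum>z\<in>{z \<in> Sp \<times> Sq. \<phi> z = y}. h y)"
        by (intro sum.cong refl) auto
      also have "\<dots> = of_nat (card {z \<in> Sp \<times> Sq. \<phi> z = y}) * h y" by simp
      also have "card {z \<in> Sp \<times> Sq. \<phi> z = y} = (p+q-2*a) choose (p-a)"
        unfolding eq using a yy by (intro fibre_card[OF I]) auto
      finally show "(\<Sum>z\<in>{z \<in> Sp \<times> Sq. \<phi> z = y}. h (\<phi> z)) = of_nat ((p+q-2*a) choose (p-a)) * h y" .
    qed
    also have "\<dots> = of_nat ((p+q-2*a) choose (p-a)) * (\<Sum>y\<in>T a. h y)"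
      by (simp add: sum_distrib_left)
    also have "(\<Sum>y\<in>T a. h y) = Wg I x a (p+q-2*a)"
    proof -
      have e: "a + (p+q-2*a) = p+q-a" using a by simp
      have fin2: "finite {A. A \<subseteq> S \<and> card A = a}" if "S \<subseteq> I" for S
      proof -
        have "finite S" using that I by (rule finite_subset)
        then have "finite (Pow S)" by simp
        then show ?thesis by (rule finite_subset[rotated]) auto
      qed
      have "(\<Sum>S\<in>{S. S \<subseteq> I \<and> card S = p+q-a}. \<Sum>A\<in>{A. A \<subseteq> S \<and> card A = a}. h (S,A))
           = (\<Sum>(S,A)\<in>T a. h (S,A))"
        unfolding T_def using fPow fin2 by (intro sum.Sigma) auto
      then have "(\<Sum>y\<in>T a. h y) = (\<Sum>S\<in>{S. S \<subseteq> I \<and> card S = p+q-a}. \<Sum>A\<in>{A. A \<subseteq> S \<and> card A = a}. h (S,A))"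
        by simp
      then show ?thesis unfolding Wg_def e h_def by simp
    qed
    finally show "(\<Sum>y\<in>T a. \<Sum>z\<in>{z \<in> Sp \<times> Sq. \<phi> z = y}. h (\<phi> z))
        = of_nat ((p+q-2*a) choose (p-a)) * Wg I x a (p+q-2*a)" .
  qed
  finally show ?thesis .
qed

lemma mset_sl: "mset (sorted_list_of_set A) = mset_set A"
  by (metis mset_sorted_list_of_multiset sorted_list_of_mset_set)

lemma prod_nth_distinct: "distinct l \<Longrightarrow> (\<Prod>k<length l. f (l!k)) = (\<Prod>i\<in>set l. f i)"
  using prod.reindex_bij_betw[OF bij_betw_nth[of l "{..<length l}" "set l"], of f] by simp

definition chi :: "nat set \<Rightarrow> nat set \<Rightarrow> int list" where
  "chi S A = map (\<lambda>i. if i \<in> A then 2 else 1) (sorted_list_of_set S)"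

lemma mset_chi:
  assumes "finite S" "A \<subseteq> S"
  shows "mset (chi S A) = replicate_mset (card A) 2 + replicate_mset (card (S - A)) 1"
proof -
  have fA: "finite A" using assms finite_subset by auto
  have "mset (chi S A) = image_mset (\<lambda>i. if i \<in> A then 2 else 1) (mset_set S)"
    unfolding chi_def by (simp add: mset_sl)
  also have "mset_set S = mset_set A + mset_set (S - A)"
    using assms fA mset_set_Union[of A "S - A"] by (simp add: Un_absorb1)
  also have "image_mset (\<lambda>i. if i \<in> A then 2 else 1) (mset_set A + mset_set (S - A))
     = image_mset (\<lambda>_. 2::int) (mset_set A) + image_mset (\<lambda>_. 1) (mset_set (S - A))"
    unfolding image_mset_union
    by (intro arg_cong2[where f="(+)"] image_mset_cong) (use fA assms in auto)
  also have "\<dots> = replicate_mset (card A) 2 + replicate_mset (card (S - A)) 1"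
    by (simp add: image_mset_const_eq)
  finally show ?thesis .
qed

lemma powi_neg_xx: "(1 - zeta n ^ i) powi (- (if b then 2 else 1)) = xx n i * (if b then xx n i else 1)"
  by (simp add: xx_def power_int_minus power2_eq_square)

lemma inner_bridge:
  assumes fS: "finite S" and cS: "card S = a + b"
  shows "(\<Sum>\<sigma>\<in>permutations_of_multiset (mset (replicate a 2 @ replicate b (1::int))).
            \<Prod>k<length \<sigma>. (1 - zeta n ^ (sorted_list_of_set S ! k)) powi (- (\<sigma> ! k)))
       = (\<Sum>A\<in>{A. A \<subseteq> S \<and> card A = a}. (\<Prod>i\<in>S. xx n i) * (\<Prod>i\<in>A. xx n i))"
proof -
  define l where "l = sorted_list_of_set S"
  have dl: "distinct l" and sl: "set l = S" and ll: "length l = a + b"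
    using fS cS by (auto simp: l_def)
  define M where "M = mset (replicate a 2 @ replicate b (1::int))"
  have M: "M = replicate_mset a 2 + replicate_mset b 1" by (simp add: M_def)
  define \<psi> where "\<psi> = (\<lambda>\<sigma>::int list. {l!k | k. k < a + b \<and> \<sigma>!k = 2})"
  have mc: "mset (chi S A) = M \<longleftrightarrow> card A = a" if "A \<subseteq> S" for A
  proof -
    have fA: "finite A" using that fS finite_subset by auto
    have cd: "card (S - A) = a + b - card A" using that fS fA cS by (simp add: card_Diff_subset)
    show ?thesis
    proof
      assume "mset (chi S A) = M"
      then have "count (mset (chi S A)) 2 = count M 2" by simp
      then show "card A = a" using mset_chi[OF fS that] M by simp
    next
      assume "card A = a"
      then show "mset (chi S A) = M" using mset_chi[OF fS that] M cd by simp
    qed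
  qed
  have chi_nth: "chi S A ! k = (if l!k \<in> A then 2 else 1)" if "k < a + b" for A k
    using that ll by (simp add: chi_def l_def[symmetric])
  have bij: "bij_betw (chi S) {A. A \<subseteq> S \<and> card A = a} (permutations_of_multiset M)"
  proof (rule bij_betw_byWitness[where f' = \<psi>])
    show "\<forall>A\<in>{A. A \<subseteq> S \<and> card A = a}. \<psi> (chi S A) = A"
    proof
      fix A assume A: "A \<in> {A. A \<subseteq> S \<and> card A = a}"
      have "\<psi> (chi S A) = {l!k | k. k < a + b \<and> l!k \<in> A}"
        unfolding \<psi>_def using chi_nth by (auto split: if_splits)
      also have "\<dots> = A"
      proof
        show "{l!k | k. k < a + b \<and> l!k \<in> A} \<subseteq> A" by auto
        show "A \<subseteq> {l!k | k. k < a + b \<and> l!k \<in> A}"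
        proof
          fix x assume "x \<in> A"
          then have "x \<in> set l" using A sl by auto
          then obtain k where "k < length l" "l!k = x" by (auto simp: in_set_conv_nth)
          then show "x \<in> {l!k | k. k < a + b \<and> l!k \<in> A}" using \<open>x \<in> A\<close> ll by auto
        qed
      qed
      finally show "\<psi> (chi S A) = A" .
    qed
    have chipsi: "chi S (\<psi> \<sigma>) = \<sigma>" if "\<sigma> \<in> permutations_of_multiset M" for \<sigma>
    proof -
      have ms: "mset \<sigma> = M" using that by (simp add: permutations_of_multiset_def)
      have len: "length \<sigma> = a + b" using arg_cong[OF ms, of size] M by simp
      have vals: "\<sigma>!k = 1 \<or> \<sigma>!k = 2" if "k < a + b" for k
      proof -
        have "\<sigma>!k \<in> set \<sigma>" using that len by simp
        then have "\<sigma>!k \<in># M" using ms by (metis set_mset_mset)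
        then show ?thesis using M by (auto split: if_splits)
      qed
      show ?thesis
      proof (rule nth_equalityI)
        show "length (chi S (\<psi> \<sigma>)) = length \<sigma>" using len ll by (simp add: chi_def l_def)
        fix k assume "k < length (chi S (\<psi> \<sigma>))"
        then have k: "k < a + b" using ll by (simp add: chi_def l_def)
        have "l!k \<in> \<psi> \<sigma> \<longleftrightarrow> \<sigma>!k = 2"
          unfolding \<psi>_def using k dl ll by (auto simp: nth_eq_iff_index_eq)
        then show "chi S (\<psi> \<sigma>) ! k = \<sigma> ! k" using chi_nth[OF k] vals[OF k] by auto
      qed
    qed
    then show "\<forall>\<sigma>\<in>permutations_of_multiset M. chi S (\<psi> \<sigma>) = \<sigma>" by blast
    show "chi S ` {A. A \<subseteq> S \<and> card A = a} \<subseteq> permutations_of_multiset M"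
      using mc by (auto simp: permutations_of_multiset_def)
    show "\<psi> ` permutations_of_multiset M \<subseteq> {A. A \<subseteq> S \<and> card A = a}"
    proof
      fix A assume "A \<in> \<psi> ` permutations_of_multiset M"
      then obtain \<sigma> where \<sigma>: "\<sigma> \<in> permutations_of_multiset M" "A = \<psi> \<sigma>" by auto
      have AS: "A \<subseteq> S" using \<sigma> sl ll unfolding \<psi>_def by auto
      have "mset (chi S A) = M" using chipsi[OF \<sigma>(1)] \<sigma> by (simp add: permutations_of_multiset_def)
      then show "A \<in> {A. A \<subseteq> S \<and> card A = a}" using mc[OF AS] AS by simp
    qed
  qed
  have "(\<Sum>\<sigma>\<in>permutations_of_multiset M. \<Prod>k<length \<sigma>. (1 - zeta n ^ (l ! k)) powi (- (\<sigma> ! k)))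
      = (\<Sum>A\<in>{A. A \<subseteq> S \<and> card A = a}. \<Prod>k<length (chi S A). (1 - zeta n ^ (l ! k)) powi (- (chi S A ! k)))"
    by (rule sum.reindex_bij_betw[OF bij, symmetric])
  also have "\<dots> = (\<Sum>A\<in>{A. A \<subseteq> S \<and> card A = a}. (\<Prod>i\<in>S. xx n i) * (\<Prod>i\<in>A. xx n i))"
  proof (intro sum.cong refl)
    fix A assume A: "A \<in> {A. A \<subseteq> S \<and> card A = a}"
    have "(\<Prod>k<length (chi S A). (1 - zeta n ^ (l ! k)) powi (- (chi S A ! k)))
        = (\<Prod>k<length l. xx n (l!k) * (if l!k \<in> A then xx n (l!k) else 1))"
      using chi_nth ll by (intro prod.cong) (auto simp: chi_def l_def[symmetric] powi_neg_xx[symmetric])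
    also have "\<dots> = (\<Prod>i\<in>S. xx n i * (if i \<in> A then xx n i else 1))"
      using prod_nth_distinct[OF dl, of "\<lambda>i. xx n i * (if i \<in> A then xx n i else 1)"] sl by simp
    also have "\<dots> = (\<Prod>i\<in>S. xx n i) * (\<Prod>i\<in>S. if i \<in> A then xx n i else 1)"
      by (rule prod.distrib)
    also have "(\<Prod>i\<in>S. if i \<in> A then xx n i else 1) = (\<Prod>i\<in>A. xx n i)"
    proof -
      have "S \<inter> A = A" "A \<inter> S = A" using A by auto
      then show ?thesis using fS by (simp add: prod.If_cases)
    qed
    finally show "(\<Prod>k<length (chi S A). (1 - zeta n ^ (l ! k)) powi (- (chi S A ! k)))
        = (\<Prod>i\<in>S. xx n i) * (\<Prod>i\<in>A. xx n i)" .
  qed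
  finally show ?thesis unfolding M_def l_def .
qed

lemma bij_sl:
  "bij_betw sorted_list_of_set {S. S \<subseteq> {1..n-1} \<and> card S = L}
     {is. sorted_wrt (<) is \<and> length is = L \<and> set is \<subseteq> {1..n-1::nat}}"
proof (rule bij_betw_byWitness[where f' = set])
  show "\<forall>S\<in>{S. S \<subseteq> {1..n-1} \<and> card S = L}. set (sorted_list_of_set S) = S"
  proof
    fix S assume "S \<in> {S. S \<subseteq> {1..n-1} \<and> card S = L}"
    then have "finite S" using finite_subset[of S "{1..n-1}"] by simp
    then show "set (sorted_list_of_set S) = S" by simp
  qed
  show "\<forall>is\<in>{is. sorted_wrt (<) is \<and> length is = L \<and> set is \<subseteq> {1..n-1::nat}}.
          sorted_list_of_set (set is) = is"
    by (auto intro: strict_sorted_equal)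
  show "sorted_list_of_set ` {S. S \<subseteq> {1..n-1} \<and> card S = L}
     \<subseteq> {is. sorted_wrt (<) is \<and> length is = L \<and> set is \<subseteq> {1..n-1::nat}}"
  proof
    fix l assume "l \<in> sorted_list_of_set ` {S. S \<subseteq> {1..n-1} \<and> card S = L}"
    then obtain S where S: "S \<subseteq> {1..n-1}" "card S = L" "l = sorted_list_of_set S" by auto
    then have "finite S" using finite_subset[of S "{1..n-1}"] by simp
    then show "l \<in> {is. sorted_wrt (<) is \<and> length is = L \<and> set is \<subseteq> {1..n-1::nat}}"
      using S by simp
  qed
  show "set ` {is. sorted_wrt (<) is \<and> length is = L \<and> set is \<subseteq> {1..n-1::nat}}
     \<subseteq> {S. S \<subseteq> {1..n-1} \<and> card S = L}"
    by (auto simp: strict_sorted_iff distinct_card)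
qed

lemma bridge: "YY n (replicate a 2 @ replicate b 1) = Wg {1..n-1} (xx n) a b"
proof -
  define M where "M = mset (replicate a 2 @ replicate b (1::int))"
  define SL where "SL = {is. sorted_wrt (<) is \<and> length is = a + b \<and> set is \<subseteq> {1..n-1::nat}}"
  define F where "F = (\<lambda>\<sigma> is. \<Prod>k<length \<sigma>. (1 - zeta n ^ (is ! k)) powi (- (\<sigma> ! k)))"
  have len: "length \<sigma> = a + b" if "\<sigma> \<in> permutations_of_multiset M" for \<sigma>
  proof -
    have "mset \<sigma> = M" using that by (simp add: permutations_of_multiset_def)
    then have "size (mset \<sigma>) = size M" by simp
    then show ?thesis by (simp add: M_def)
  qed
  have "YY n (replicate a 2 @ replicate b 1) = (\<Sum>\<sigma>\<in>permutations_of_multiset M. \<Sum>is\<in>SL. F \<sigma> is)"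
    unfolding YY_def M_def
  proof (intro sum.cong refl)
    fix \<sigma> assume "\<sigma> \<in> permutations_of_multiset (mset (replicate a 2 @ replicate b (1::int)))"
    then have "length \<sigma> = a + b" using len M_def by simp
    then show "ZZ n \<sigma> = (\<Sum>is\<in>SL. F \<sigma> is)" unfolding ZZ_def SL_def F_def by simp
  qed
  also have "\<dots> = (\<Sum>is\<in>SL. \<Sum>\<sigma>\<in>permutations_of_multiset M. F \<sigma> is)"
    by (rule sum.swap)
  also have "\<dots> = (\<Sum>S\<in>{S. S \<subseteq> {1..n-1} \<and> card S = a + b}.
                   \<Sum>\<sigma>\<in>permutations_of_multiset M. F \<sigma> (sorted_list_of_set S))"
    unfolding SL_def by (rule sum.reindex_bij_betw[OF bij_sl, symmetric])
  also have "\<dots> = Wg {1..n-1} (xx n) a b"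
    unfolding Wg_def
  proof (intro sum.cong refl)
    fix S assume S: "S \<in> {S. S \<subseteq> {1..n-1} \<and> card S = a + b}"
    then have "finite S" by (auto intro: finite_subset)
    then show "(\<Sum>\<sigma>\<in>permutations_of_multiset M. F \<sigma> (sorted_list_of_set S)) =
         (\<Sum>A\<in>{A. A \<subseteq> S \<and> card A = a}. (\<Prod>i\<in>S. xx n i) * (\<Prod>i\<in>A. xx n i))"
      unfolding M_def F_def using inner_bridge[of S a b n] S by simp
  qed
  finally show ?thesis .
qed

lemma EE_Eg: "Eg {1..N-1} (xx N) k = EE N k"
  unfolding Eg_def EE_def ..

lemma W_zero:
  assumes "a + b > N - 1"
  shows "Wg {1..N-1} (xx N) a b = 0"
proof -
  have "{S. S \<subseteq> {1..N-1} \<and> card S = a + b} = {}"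
  proof (rule ccontr)
    assume "{S. S \<subseteq> {1..N-1} \<and> card S = a + b} \<noteq> {}"
    then obtain S where "S \<subseteq> {1..N-1}" "card S = a + b" by auto
    then have "a + b \<le> card {1..N-1}" using card_mono[of "{1..N-1}" S] by simp
    then show False using assms by simp
  qed
  then show ?thesis unfolding Wg_def by (simp only: sum.empty)
qed

lemma sum_single:
  assumes "K \<in> A" "finite A" "\<And>a. a \<in> A \<Longrightarrow> a \<noteq> K \<Longrightarrow> f a = 0"
  shows "sum f A = f K"
proof -
  have "sum f A = sum f {K}"
    by (rule sum.mono_neutral_right) (use assms in auto)
  then show ?thesis by simp
qed

lemma W_full:
  assumes "a \<le> N - 1"
  shows "Wg {1..N-1} (xx N) a (N-1-a) = EE N a * EE N (N-1)"
proof -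
  have "EE N a * EE N (N-1) = (\<Sum>a'\<le>min a (N-1). of_nat ((a+(N-1)-2*a') choose (a-a')) * Wg {1..N-1} (xx N) a' (a+(N-1)-2*a'))"
    using Eg_mult[of "{1..N-1}" "xx N" a "N-1"] unfolding EE_Eg by simp
  also have "\<dots> = of_nat ((a+(N-1)-2*a) choose (a-a)) * Wg {1..N-1} (xx N) a (a+(N-1)-2*a)"
  proof (rule sum_single)
    show "a \<in> {..min a (N-1)}" using assms by simp
    fix a' assume "a' \<in> {..min a (N-1)}" "a' \<noteq> a"
    then have gt: "a' + (a+(N-1)-2*a') > N - 1" by auto
    show "of_nat ((a+(N-1)-2*a') choose (a-a')) * Wg {1..N-1} (xx N) a' (a+(N-1)-2*a') = 0"
      using W_zero[OF gt] by simp
  qed simp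
  also have "a+(N-1)-2*a = N-1-a" using assms by simp
  finally show ?thesis by simp
qed

lemma binom_id1: "L \<le> M \<Longrightarrow> M + 1 \<le> N \<Longrightarrow>
   (N - 1 - M + L choose L) * (N choose (M - L + 1)) = (N choose (M+1)) * (M + 1 choose L)"
proof -
  assume a: "L \<le> M" "M + 1 \<le> N"
  have "(N choose (M+1)) * ((M+1) choose (M+1-L)) = (N choose (M+1-L)) * ((N - (M+1-L)) choose ((M+1) - (M+1-L)))"
    using a by (intro choose_mult) auto
  moreover have "(M+1) choose (M+1-L) = (M+1) choose L" using a by (subst binomial_symmetric) auto
  moreover have "M+1-L = M-L+1" "N - (M+1-L) = N-1-M+L" "(M+1) - (M+1-L) = L" using a by auto
  ultimately show ?thesis by (simp add: mult.commute)
qed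

lemma main_nat:
  assumes N: "M + 2 \<le> N" and L: "1 \<le> L" "L \<le> M"
  shows "(\<Sum>a\<in>{M-L+1..min M (N-L-1)}. of_nat ((M+(N-L-1)-2*a) choose (M-a)) * Wg {1..N-1} (xx N) a (M+(N-L-1)-2*a))
         = 1 / (of_nat N * of_nat (M+1)) * of_nat (N-1 choose M) * (of_nat (N choose L) - of_nat (M+1 choose L))"
proof -
  define Q where "Q = N - L - 1"
  define T where "T = (\<lambda>a. of_nat ((M+Q-2*a) choose (M-a)) * Wg {1..N-1} (xx N) a (M+Q-2*a))"
  have NN: "N \<ge> 1" using N by simp
  have "EE N M * EE N Q = (\<Sum>a\<le>min M Q. T a)"
    using Eg_mult[of "{1..N-1}" "xx N" M Q] unfolding EE_Eg T_def by simp
  also have "{..min M Q} = {..<M-L} \<union> {M-L} \<union> {M-L+1..min M Q}"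
    using N L by (auto simp: Q_def)
  also have "(\<Sum>a\<in>{..<M-L} \<union> {M-L} \<union> {M-L+1..min M Q}. T a)
     = (\<Sum>a\<in>{..<M-L}. T a) + T (M-L) + (\<Sum>a\<in>{M-L+1..min M Q}. T a)"
    by (subst sum.union_disjoint, simp, simp, force, subst sum.union_disjoint) auto
  also have "(\<Sum>a\<in>{..<M-L}. T a) = 0"
  proof (rule sum.neutral, rule ballI)
    fix a assume "a \<in> {..<M-L}"
    then have gt: "a + (M+Q-2*a) > N - 1" using N L by (auto simp: Q_def)
    show "T a = 0" unfolding T_def using W_zero[OF gt] by simp
  qed
  also have "T (M-L) = of_nat ((N-1-M+L) choose L) * (EE N (M-L) * EE N (N-1))"
  proof -
    have e1: "M+Q-2*(M-L) = N-1-(M-L)" "M-(M-L) = L" "N-1-(M-L) = N-1-M+L" using N L by (auto simp: Q_def)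
    have "T (M-L) = of_nat ((N-1-M+L) choose L) * Wg {1..N-1} (xx N) (M-L) (N-1-(M-L))"
      unfolding T_def e1(1) e1(2) e1(3) ..
    also have "Wg {1..N-1} (xx N) (M-L) (N-1-(M-L)) = EE N (M-L) * EE N (N-1)"
      using N by (intro W_full) auto
    finally show ?thesis .
  qed
  finally have eq: "(\<Sum>a\<in>{M-L+1..min M Q}. T a) = EE N M * EE N Q - of_nat ((N-1-M+L) choose L) * (EE N (M-L) * EE N (N-1))"
    by (simp add: algebra_simps)
  have b1: "(N-1-M+L choose L) * (N choose (M-L+1)) = (N choose (M+1)) * (M + 1 choose L)"
    using N L by (intro binom_id1) auto
  have b2: "Suc M * (N choose Suc M) = N * (N - 1 choose M)" by (rule binomial_absorption)
  have b3: "N choose (Q+1) = N choose L" using N L by (subst binomial_symmetric) (auto simp: Q_def)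
  have b4: "N - 1 + 1 = N" "M - L + 1 = M - L + 1" using NN by auto
  have c1: "(of_nat (N-1-M+L choose L) :: complex) * of_nat (N choose (M-L+1)) = of_nat (N choose (M+1)) * of_nat (M + 1 choose L)"
    using arg_cong[OF b1, of "of_nat :: nat \<Rightarrow> complex"] by simp
  have c2: "(of_nat (Suc M) :: complex) * of_nat (N choose Suc M) = of_nat N * of_nat (N - 1 choose M)"
    by (metis b2 of_nat_mult)
  have NZ: "(of_nat N :: complex) \<noteq> 0" using NN by simp
  have "(\<Sum>a\<in>{M-L+1..min M Q}. T a) = of_nat (N choose (M+1)) / of_nat N * (of_nat (N choose L) / of_nat N)
        - of_nat ((N-1-M+L) choose L) * (of_nat (N choose (M-L+1)) / of_nat N * (1 / of_nat N))"
    unfolding eq EE_formula[OF NN] b3 using NN by simp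
  also have "\<dots> = of_nat (N choose (M+1)) * (of_nat (N choose L) - of_nat (M+1 choose L)) / (of_nat N)^2"
    using c1 NZ by (simp add: field_simps power2_eq_square)
  also have "\<dots> = 1 / (of_nat N * of_nat (M+1)) * of_nat (N-1 choose M) * (of_nat (N choose L) - of_nat (M+1 choose L))"
  proof -
    have MZ: "(of_nat (M+1) :: complex) \<noteq> 0" by (simp only: of_nat_eq_0_iff)
    have "(of_nat (N choose (M+1)) :: complex) = of_nat N * of_nat (N-1 choose M) / of_nat (M+1)"
      using c2 MZ by (simp add: field_simps)
    moreover have "\<And>B X Y n' m' :: complex. n' \<noteq> 0 \<Longrightarrow> m' \<noteq> 0 \<Longrightarrow>
        (n' * B / m') * (X - Y) / n'^2 = 1 / (n' * m') * B * (X - Y)"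
      by (simp add: field_simps power2_eq_square)
    ultimately show ?thesis using NZ MZ by metis
  qed
  finally show ?thesis unfolding T_def Q_def .
qed

lemma binomZ_nat: "binomZ (int a) (int b) = of_nat (a choose b)"
  by (simp add: binomZ_def)

lemma part1:
  fixes n m l :: int
  assumes "n - 1 \<ge> m" and "m \<ge> l" and "l \<ge> 0"
  shows "(\<Sum>j \<in> {0..n-m-2}. binomZ (n-m+l-3-2*j) (l-1-j) * Y21 (nat n) (m-l+1+j) (n-m+l-3-2*j))
           = 1 / (of_int n * of_int (m+1)) * binomZ (n-1) m * (binomZ n l - binomZ (m+1) l)"
proof -
  define N where "N = nat n"
  define M where "M = nat m"
  define L where "L = nat l"
  have nml: "n = int N" "m = int M" "l = int L"
    using assms unfolding N_def M_def L_def by simp_all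
  have NM: "M + 1 \<le> N" "L \<le> M" using assms nml by auto
  consider "L = 0" | "M + 1 = N" | "1 \<le> L" "M + 2 \<le> N" using NM by linarith
  then show ?thesis
  proof cases
    case 1
    have "binomZ (n-m+l-3-2*j) (l-1-j) = 0" if "j \<in> {0..n-m-2}" for j
      using that 1 nml by (simp add: binomZ_def)
    then have "(\<Sum>j \<in> {0..n-m-2}. binomZ (n-m+l-3-2*j) (l-1-j) * Y21 (nat n) (m-l+1+j) (n-m+l-3-2*j)) = 0"
      by simp
    moreover have "binomZ n l - binomZ (m+1) l = 0" using 1 nml by (simp add: binomZ_def)
    ultimately show ?thesis by simp
  next
    case 2
    then have "{0..n-m-2} = {}" using nml by auto
    moreover have "binomZ n l - binomZ (m+1) l = 0"
    proof -
      have "m + 1 = n" using 2 nml by simp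
      then show ?thesis by simp
    qed
    ultimately show ?thesis by simp
  next
    case 3
    define h where "h = (\<lambda>j. binomZ (n-m+l-3-2*j) (l-1-j) * Y21 (nat n) (m-l+1+j) (n-m+l-3-2*j))"
    define g where "g = (\<lambda>a::nat. int a - (m - l + 1))"
    have "(\<Sum>j \<in> {0..n-m-2}. h j) = (\<Sum>j \<in> {0..min (l-1) (n-m-2)}. h j)"
    proof (rule sum.mono_neutral_right)
      show "\<forall>j\<in>{0..n-m-2} - {0..min (l-1) (n-m-2)}. h j = 0"
        unfolding h_def by (auto simp: binomZ_def)
      show "finite {0..n-m-2}" by simp
      show "{0..min (l-1) (n-m-2)} \<subseteq> {0..n-m-2}" by (simp add: subset_iff)
    qed
    also have "\<dots> = (\<Sum>a\<in>{M-L+1..min M (N-L-1)}. h (g a))"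
    proof (rule sum.reindex_bij_betw[symmetric])
      show "bij_betw g {M-L+1..min M (N-L-1)} {0..min (l-1) (n-m-2)}"
      proof (rule bij_betw_byWitness[where f' = "\<lambda>j. nat (j + m - l + 1)"])
        show "\<forall>a\<in>{M-L+1..min M (N-L-1)}. nat (g a + m - l + 1) = a"
          unfolding g_def by auto
        show "\<forall>j\<in>{0..min (l-1) (n-m-2)}. g (nat (j + m - l + 1)) = j"
          unfolding g_def using nml 3 NM by auto
        show "g ` {M-L+1..min M (N-L-1)} \<subseteq> {0..min (l-1) (n-m-2)}"
          unfolding g_def using nml 3 by auto
        show "(\<lambda>j. nat (j + m - l + 1)) ` {0..min (l-1) (n-m-2)} \<subseteq> {M-L+1..min M (N-L-1)}"
          using nml 3 NM by (auto simp: le_nat_iff nat_le_iff)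
      qed
    qed
    also have "\<dots> = (\<Sum>a\<in>{M-L+1..min M (N-L-1)}. of_nat ((M+(N-L-1)-2*a) choose (M-a)) * Wg {1..N-1} (xx N) a (M+(N-L-1)-2*a))"
    proof (intro sum.cong refl)
      fix a assume a: "a \<in> {M-L+1..min M (N-L-1)}"
      have e1: "n-m+l-3-2*g a = int (M+(N-L-1)-2*a)" unfolding g_def using a nml 3 by auto
      have e2: "l-1-g a = int (M-a)" unfolding g_def using a nml 3 by auto
      have e3: "m-l+1+g a = int a" unfolding g_def by simp
      show "h (g a) = of_nat ((M+(N-L-1)-2*a) choose (M-a)) * Wg {1..N-1} (xx N) a (M+(N-L-1)-2*a)"
        unfolding h_def e1 e2 e3 binomZ_nat Y21_def using nml by (simp add: bridge)
    qed
    also have "\<dots> = 1 / (of_nat N * of_nat (M+1)) * of_nat (N-1 choose M) * (of_nat (N choose L) - of_nat (M+1 choose L))"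
      using 3 NM by (intro main_nat) auto
    also have "\<dots> = 1 / (of_int n * of_int (m+1)) * binomZ (n-1) m * (binomZ n l - binomZ (m+1) l)"
    proof -
      have "n - 1 = int (N - 1)" "m + 1 = int (M + 1)" using nml 3 by auto
      then show ?thesis unfolding nml by (simp only: binomZ_nat) simp
    qed
    finally show ?thesis unfolding h_def .
  qed
qed

theorem theorem2:
  fixes n m l :: int
  assumes "n - 1 \<ge> m" and "m \<ge> l" and "l \<ge> 0"
  shows "(\<Sum>j \<in> {0..n-m-2}. binomZ (n-m+l-3-2*j) (l-1-j) * Y21 (nat n) (m-l+1+j) (n-m+l-3-2*j))
           = 1 / (of_int n * of_int (m+1)) * binomZ (n-1) m * (binomZ n l - binomZ (m+1) l)
         \<and> (l = 1 \<longrightarrow> Y21 (nat n) m (n-m-2) = of_int (n-m-1) / (of_int n * of_int (m+1)) * binomZ (n-1) m)"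
proof
  show "(\<Sum>j \<in> {0..n-m-2}. binomZ (n-m+l-3-2*j) (l-1-j) * Y21 (nat n) (m-l+1+j) (n-m+l-3-2*j))
           = 1 / (of_int n * of_int (m+1)) * binomZ (n-1) m * (binomZ n l - binomZ (m+1) l)"
    using part1[OF assms] .
  show "l = 1 \<longrightarrow> Y21 (nat n) m (n-m-2) = of_int (n-m-1) / (of_int n * of_int (m+1)) * binomZ (n-1) m"
  proof
    assume l1: "l = 1"
    have P: "(\<Sum>j \<in> {0..n-m-2}. binomZ (n-m-2-2*j) (-j) * Y21 (nat n) (m+j) (n-m-2-2*j))
           = 1 / (of_int n * of_int (m+1)) * binomZ (n-1) m * (binomZ n 1 - binomZ (m+1) 1)"
      using part1[OF assms] l1 by simp
    have n1: "n \<ge> 1" using assms l1 by simp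
    have b1: "binomZ n 1 - binomZ (m+1) 1 = of_int (n - m - 1)"
      using n1 assms l1 by (simp add: binomZ_def of_nat_diff)
    show "Y21 (nat n) m (n-m-2) = of_int (n-m-1) / (of_int n * of_int (m+1)) * binomZ (n-1) m"
    proof (cases "m = n - 1")
      case True
      then show ?thesis by (simp add: Y21_def)
    next
      case False
      have "(\<Sum>j \<in> {0..n-m-2}. binomZ (n-m-2-2*j) (-j) * Y21 (nat n) (m+j) (n-m-2-2*j))
            = binomZ (n-m-2-2*0) (-0) * Y21 (nat n) (m+0) (n-m-2-2*0)"
        by (rule sum_single) (use False assms in \<open>auto simp: binomZ_def\<close>)
      also have "\<dots> = Y21 (nat n) m (n-m-2)"
        using False assms by (simp add: binomZ_def)
      finally have "Y21 (nat n) m (n-m-2) = 1 / (of_int n * of_int (m+1)) * binomZ (n-1) m * of_int (n-m-1)"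
        using P b1 by simp
      then show ?thesis by (simp add: ac_simps)
    qed
  qed
qed

end
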